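(* Fix $k\in\mathcal{K}$ and an SU index $k'$. Consider problem (T1): maximize over $p_{k,k'}\ge0$, $b_{k,k'}\ge0$, $q_k\ge0$, $w_k\ge0$ $$EE_k=\frac{b_{k,k'}\log_2\!\Big(1+\frac{p_{k,k'}g_{k,k'}}{b_{k,k'}N_0}\Big)}{\frac{p_{k,k'}}{\xi}+\frac{q_k}{\xi}}$$ subject to $b_{k,k'}+w_k\le W^k_{MC}$ and $w_k\log_2\!\big(1+\frac{q_kh_k}{w_kN_0}\big)\ge R^k_{MC}$. Then (T1) is equivalent (same optimal value, with optimal $(p_{k,k'},w_k)$ corresponding) to the problem (T2): maximize over $p_{k,k'}\ge0$, $w_k\ge0$ $$EE_k=\frac{(W^k_{MC}-w_k)\log_2\!\Big(1+\frac{p_{k,k'}g_{k,k'}}{(W^k_{MC}-w_k)N_0}\Big)}{\frac{p_{k,k'}}{\xi}+\big(2^{R^k_{MC}/w_k}-1\big)\frac{w_kN_0}{h_k\xi}},$$ and the objective $EE_k$ of (T2) is strictly and jointly quasi-concave in $(p_{k,k'},w_k)$; hence (T2) is a quasi-concave maximization problem.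
   Context: Constants: $N_0>0$ noise spectral density, $\xi\in(0,1]$ power amplifier efficiency; for the macro user $k$: licensed bandwidth $W^k_{MC}>0$, minimum rate requirement $R^k_{MC}>0$, channel gain $h_k>0$ from the small-cell base station to MU $k$, and $g_{k,k'}>0$ the channel gain to small-cell user $k'$ on MU $k$'s bandwidth. The quantity $EE_k$ is the "trading energy efficiency" of MU $k$: rate gained by the small cell using part $b_{k,k'}$ of MU $k$'s band for SU $k'$, divided by the power spent on SU $k'$ and on serving MU $k$ with bandwidth $w_k$ and power $q_k$. Expressions are considered where defined, i.e. $0<w_k$ and $w_k\le W^k_{MC}$ (with $b\log_2(1+x/b)$ taken as $0$ at $b=0$). *)

theory Defs
  imports "HOL-Analysis.Analysis"
begin

text \<open>Shannon-type rate  b log2(1 + x/b), with the convention that it is 0 at b = 0.\<close>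
definition rate :: "real \<Rightarrow> real \<Rightarrow> real" where
  "rate b x = (if b = 0 then 0 else b * log 2 (1 + x / b))"

definition EE1 :: "real \<Rightarrow> real \<Rightarrow> real \<Rightarrow> real \<Rightarrow> real \<Rightarrow> real \<Rightarrow> real \<times> real \<times> real \<times> real \<Rightarrow> real" where
  "EE1 N0 \<xi> h g W R = (\<lambda>(p, b, q, w). rate b (p * g / N0) / (p / \<xi> + q / \<xi>))"

definition F1 :: "real \<Rightarrow> real \<Rightarrow> real \<Rightarrow> real \<Rightarrow> real \<Rightarrow> real \<Rightarrow> (real \<times> real \<times> real \<times> real) set" where
  "F1 N0 \<xi> h g W R = {(p, b, q, w). 0 \<le> p \<and> 0 \<le> b \<and> 0 \<le> q \<and> 0 < w \<and> w \<le> W \<and>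
       b + w \<le> W \<and> w * log 2 (1 + q * h / (w * N0)) \<ge> R}"

text \<open>Minimal MU power for a given bandwidth w (rate constraint with equality).\<close>
definition qmin :: "real \<Rightarrow> real \<Rightarrow> real \<Rightarrow> real \<Rightarrow> real" where
  "qmin N0 h R w = (2 powr (R / w) - 1) * w * N0 / h"

definition EE2 :: "real \<Rightarrow> real \<Rightarrow> real \<Rightarrow> real \<Rightarrow> real \<Rightarrow> real \<Rightarrow> real \<times> real \<Rightarrow> real" where
  "EE2 N0 \<xi> h g W R = (\<lambda>(p, w). rate (W - w) (p * g / N0) /
       (p / \<xi> + (2 powr (R / w) - 1) * (w * N0 / (h * \<xi>))))"

definition F2 :: "real \<Rightarrow> (real \<times> real) set" where
  "F2 W = {(p, w). 0 \<le> p \<and> 0 < w \<and> w \<le> W}"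

definition quasiconcave_on :: "('a::real_vector) set \<Rightarrow> ('a \<Rightarrow> real) \<Rightarrow> bool" where
  "quasiconcave_on S f \<longleftrightarrow> convex S \<and>
     (\<forall>x\<in>S. \<forall>y\<in>S. \<forall>t::real. 0 \<le> t \<and> t \<le> 1 \<longrightarrow>
        f (t *\<^sub>R x + (1 - t) *\<^sub>R y) \<ge> min (f x) (f y))"

definition strictly_quasiconcave_on :: "('a::real_vector) set \<Rightarrow> ('a \<Rightarrow> real) \<Rightarrow> bool" where
  "strictly_quasiconcave_on S f \<longleftrightarrow> convex S \<and>
     (\<forall>x\<in>S. \<forall>y\<in>S. \<forall>t::real. x \<noteq> y \<and> 0 < t \<and> t < 1 \<longrightarrow>
        f (t *\<^sub>R x + (1 - t) *\<^sub>R y) > min (f x) (f y))"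

end

theory Submission imports Defs begin

lemma exp_strict: fixes x::real assumes "x \<noteq> 0" shows "1 + x < exp x"
proof (cases "1 + x/2 \<ge> 0")
  case True
  have "(1 + x/2)^2 \<le> exp(x/2)^2" using exp_ge_add_one_self[of "x/2"] True by (intro power_mono) auto
  moreover have "exp(x/2)^2 = exp x" by (simp add: power2_eq_square flip: exp_add)
  moreover have "(1+x/2)^2 = 1 + x + x^2/4" by (simp add: power2_eq_square field_simps)
  moreover have "x^2 > 0" using assms by simp
  ultimately show ?thesis by linarith
next
  case False then show ?thesis using exp_gt_zero[of x] by linarith
qed

lemma ln_strict: fixes u::real assumes "0 < u" "u \<noteq> 1" shows "ln u < u - 1"
  using exp_strict[of "ln u"] assms by simp

lemma ln_tan: fixes u m::real assumes "0<u" "0<m" shows "ln u \<le> ln m + (u - m)/m"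
proof -
  have "ln (u/m) \<le> u/m - 1" using assms by (intro ln_le_minus_one) simp
  moreover have "ln (u/m) = ln u - ln m" using assms by (simp add: ln_div)
  moreover have "(u-m)/m = u/m - 1" using assms by (simp add: field_simps)
  ultimately show ?thesis by linarith
qed

lemma ln_tan_strict: fixes u m::real assumes "0<u" "0<m" "u \<noteq> m" shows "ln u < ln m + (u - m)/m"
proof -
  have "ln (u/m) < u/m - 1" using assms by (intro ln_strict) auto
  moreover have "ln (u/m) = ln u - ln m" using assms by (simp add: ln_div)
  moreover have "(u-m)/m = u/m - 1" using assms by (simp add: field_simps)
  ultimately show ?thesis by linarith
qed

lemma exp_tan: fixes y m :: real shows "exp m * (1 + (y - m)) \<le> exp y"
proof -
  have "exp y = exp m * exp (y - m)" by (simp flip: exp_add)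
  then show ?thesis using exp_ge_add_one_self[of "y-m"] by (simp add: mult_left_mono)
qed

lemma exp_tan_strict: fixes y m :: real assumes "y \<noteq> m" shows "exp m * (1 + (y - m)) < exp y"
proof -
  have "exp y = exp m * exp (y - m)" by (simp flip: exp_add)
  then show ?thesis using exp_strict[of "y-m"] assms by simp
qed

definition Q :: "real \<Rightarrow> real \<Rightarrow> real" where
  "Q s a = (if s = 0 then 0 else s * ln (1 + a / s))"

lemma rate_Q: "rate s a = Q s a / ln 2" by (simp add: rate_def Q_def log_def)

lemma Q_nonneg: assumes "s \<ge> 0" "a \<ge> 0" shows "Q s a \<ge> 0"
  using assms by (simp add: Q_def)

lemma Q_pos: assumes "s > 0" "a > 0" shows "Q s a > 0"
proof -
  have "a/s > 0" using assms by simp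
  then have "ln (1 + a/s) > 0" by (intro ln_gt_zero) simp
  then show ?thesis using assms by (simp add: Q_def)
qed

lemma Q_le: assumes "s \<ge> 0" "a \<ge> 0" shows "Q s a \<le> a"
proof (cases "s = 0")
  case False
  then have "ln (1 + a/s) \<le> a/s" using assms by (intro ln_add_one_self_le_self) simp
  then have "s * ln (1 + a/s) \<le> s * (a/s)" using assms by (intro mult_left_mono) auto
  then show ?thesis using False by (simp add: Q_def)
qed (use assms in \<open>simp add: Q_def\<close>)

lemma Q_mono_a: assumes "s \<ge> 0" "0 \<le> a" "a \<le> a'" shows "Q s a \<le> Q s a'"
proof (cases "s = 0")
  case False
  then have "s > 0" using assms by simp
  have "a/s \<le> a'/s" "0 \<le> a/s" using assms \<open>s>0\<close> by (auto intro: divide_right_mono)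
  then have "ln (1 + a/s) \<le> ln (1 + a'/s)" by (subst ln_le_cancel_iff) auto
  then show ?thesis using False assms by (simp add: Q_def mult_left_mono)
qed (simp add: Q_def)

lemma Q_mono_s: assumes "0 \<le> b" "b \<le> b'" "0 \<le> a" shows "Q b a \<le> Q b' a"
proof (cases "b = 0")
  case True then show ?thesis using assms Q_nonneg[of b' a] by (simp add: Q_def)
next
  case False
  then have b: "b > 0" "b' > 0" using assms by auto
  define u where "u = 1 + a/b"
  define v where "v = 1 + a/b'"
  have "a/b' \<ge> 0" using b assms by simp
  then have v: "v > 0" "v \<ge> 1" by (auto simp: v_def)
  have "a/b \<ge> 0" using b assms by simp
  then have u: "u > 0" by (auto simp: u_def)
  have 1: "ln u \<le> ln v + (u - v)/v" using ln_tan u v by auto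
  have 2: "0 \<le> ln v + (1 - v)/v" using ln_tan[of 1 v] v by simp
  have 3: "b * (u - v) = a * (b' - b) / b'" using b by (simp add: u_def v_def field_simps)
  have 4: "a / b' = v - 1" using b by (simp add: v_def)
  have "b * ln u \<le> b * ln v + b * (u - v) / v" using mult_left_mono[OF 1, of b] b by (simp add: algebra_simps)
  also have "b * (u - v) / v = (b' - b) * ((v - 1) / v)" proof -
    have "b * (u - v) = (b' - b) * (v - 1)" using 3 4[symmetric] by (simp add: field_simps)
    then show ?thesis by (simp add: divide_simps)
  qed
  also have "(v-1)/v \<le> ln v" using 2 by (simp add: field_simps diff_divide_distrib)
  then have "(b' - b) * ((v - 1) / v) \<le> (b' - b) * ln v" using assms by (intro mult_left_mono) auto
  finally have "b * ln u \<le> b' * ln v" by (simp add: algebra_simps)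
  then show ?thesis using b by (simp add: Q_def u_def v_def)
qed


lemma Q_concave_pos:
  assumes s1: "s1 > 0" and s2: "s2 > 0" and "a1 \<ge> 0" "a2 \<ge> 0" "0 \<le> t" "t \<le> 1"
  shows "t*Q s1 a1 + (1-t)*Q s2 a2 \<le> Q (t* s1+(1-t)* s2) (t*a1+(1-t)*a2)"
proof -
  define s where "s = t* s1+(1-t)* s2"
  define a where "a = t*a1+(1-t)*a2"
  have s: "s > 0"
  proof (cases "t = 0")
    case False then have "t* s1 > 0" using assms by simp
    moreover have "(1-t)* s2 \<ge> 0" using assms by simp
    ultimately show ?thesis by (simp add: s_def)
  qed (use s2 in \<open>simp add: s_def\<close>)
  have a: "a \<ge> 0" using assms by (simp add: a_def)
  define m where "m = 1 + a/s"
  define u1 where "u1 = 1 + a1/s1"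
  define u2 where "u2 = 1 + a2/s2"
  have m: "m > 0" using a s by (simp add: m_def add_pos_nonneg)
  have u1: "u1 > 0" using assms by (simp add: u1_def add_pos_nonneg)
  have u2: "u2 > 0" using assms by (simp add: u2_def add_pos_nonneg)
  have w1: "t* s1 \<ge> 0" "(1-t)* s2 \<ge> 0" using assms by auto
  have 1: "t* s1*ln u1 \<le> t* s1*(ln m + (u1-m)/m)" using ln_tan[OF u1 m] w1 by (intro mult_left_mono) auto
  have 2: "(1-t)* s2*ln u2 \<le> (1-t)* s2*(ln m + (u2-m)/m)" using ln_tan[OF u2 m] w1 by (intro mult_left_mono) auto
  have k: "t* s1*u1 + (1-t)* s2*u2 = s*m" using s1 s2 s
    by (simp add: u1_def u2_def m_def s_def a_def field_simps)
  have "t* s1*(ln m + (u1-m)/m) + (1-t)* s2*(ln m + (u2-m)/m)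
      = s*ln m + (t* s1*u1 + (1-t)* s2*u2 - s*m)/m" using m by (simp add: s_def field_simps)
  also have "\<dots> = s * ln m" using k by simp
  finally have "t* s1*ln u1 + (1-t)* s2*ln u2 \<le> s * ln m" using 1 2 by linarith
  then show ?thesis using s s1 s2 by (simp add: Q_def s_def[symmetric] a_def[symmetric] m_def u1_def u2_def)
qed

lemma Q_concave:
  assumes s1: "s1 \<ge> 0" and s2: "s2 \<ge> 0" and a: "a1 \<ge> 0" "a2 \<ge> 0" and t: "0 \<le> t" "t \<le> 1"
  shows "t*Q s1 a1 + (1-t)*Q s2 a2 \<le> Q (t* s1+(1-t)* s2) (t*a1+(1-t)*a2)"
proof (cases "s1 = 0")
  case True
  show ?thesis
  proof (cases "s2 = 0")
    case True
    then show ?thesis using \<open>s1 = 0\<close> by (simp add: Q_def)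
  next
    case False
    then have s2p: "s2 > 0" using s2 by simp
    show ?thesis
    proof (cases "t = 1")
      case True then show ?thesis by simp
    next
      case False
      then have tt: "1 - t > 0" using t by simp
      have "(1-t)*Q s2 a2 = Q ((1-t)* s2) ((1-t)*a2)" using tt s2p by (simp add: Q_def)
      also have "\<dots> \<le> Q ((1-t)* s2) (t*a1+(1-t)*a2)"
        using tt s2p a t by (intro Q_mono_a) auto
      finally show ?thesis using True by (simp add: Q_def)
    qed
  qed
next
  case False
  then have s1p: "s1 > 0" using s1 by simp
  show ?thesis
  proof (cases "s2 = 0")
    case False
    then show ?thesis using Q_concave_pos[OF s1p _ a t] s2 by simp
  next
    case True
    show ?thesis
    proof (cases "t = 0")
      case True then show ?thesis by simp
    next
      case False
      then have tt: "t > 0" using t by simp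
      have "t*Q s1 a1 = Q (t* s1) (t*a1)" using tt s1p by (simp add: Q_def)
      also have "\<dots> \<le> Q (t* s1) (t*a1+(1-t)*a2)"
        using tt s1p a t by (intro Q_mono_a) auto
      finally show ?thesis using True by (simp add: Q_def)
    qed
  qed
qed

lemma Q_strict:
  assumes s: "s > 0" and "a1 \<ge> 0" "a2 \<ge> 0" "a1 \<noteq> a2" "0 < t" "t < 1"
  shows "t*Q s a1 + (1-t)*Q s a2 < Q s (t*a1+(1-t)*a2)"
proof -
  define a where "a = t*a1+(1-t)*a2"
  have a: "a \<ge> 0" using assms by (simp add: a_def)
  define m where "m = 1 + a/s"
  define u1 where "u1 = 1 + a1/s"
  define u2 where "u2 = 1 + a2/s"
  have m: "m > 0" using a s by (simp add: m_def add_pos_nonneg)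
  have u1: "u1 > 0" using assms by (simp add: u1_def add_pos_nonneg)
  have u2: "u2 > 0" using assms by (simp add: u2_def add_pos_nonneg)
  have "a1 \<noteq> a"
  proof
    assume "a1 = a"
    then have "(1-t)*a1 = (1-t)*a2" by (simp add: a_def algebra_simps)
    then show False using assms by simp
  qed
  then have ne: "u1 \<noteq> m" using s by (simp add: u1_def m_def)
  have 1: "t*ln u1 < t*(ln m + (u1-m)/m)" using ln_tan_strict[OF u1 m ne] assms by simp
  have 2: "(1-t)*ln u2 \<le> (1-t)*(ln m + (u2-m)/m)" using ln_tan[OF u2 m] assms by (intro mult_left_mono) auto
  have k: "t*u1 + (1-t)*u2 = m" using s by (simp add: u1_def u2_def m_def a_def field_simps)
  have "t*(ln m + (u1-m)/m) + (1-t)*(ln m + (u2-m)/m) = ln m + (t*u1 + (1-t)*u2 - m)/m"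
    using m by (simp add: field_simps)
  also have "\<dots> = ln m" using k by simp
  finally have "t*ln u1 + (1-t)*ln u2 < ln m" using 1 2 by linarith
  then have "s*(t*ln u1 + (1-t)*ln u2) < s*ln m" using s by simp
  moreover have "Q s a1 = s*ln u1" "Q s a2 = s * ln u2" "Q s (t*a1+(1-t)*a2) = s*ln m"
    using s by (simp_all add: Q_def u1_def u2_def m_def a_def)
  ultimately show ?thesis by (simp add: algebra_simps)
qed

lemma phi_convex:
  fixes c :: real
  assumes w1: "w1 > 0" and w2: "w2 > 0" and t: "0 \<le> t" "t \<le> 1"
  shows "(t*w1+(1-t)*w2) * exp (c/(t*w1+(1-t)*w2)) \<le> t*(w1*exp(c/w1)) + (1-t)*(w2*exp(c/w2))"
proof -
  define w where "w = t*w1+(1-t)*w2"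
  have w: "w > 0"
  proof (cases "t = 0")
    case False then have "t*w1 > 0" using assms by simp
    moreover have "(1-t)*w2 \<ge> 0" using assms by simp
    ultimately show ?thesis by (simp add: w_def)
  qed (use w2 in \<open>simp add: w_def\<close>)
  define m where "m = c/w"
  have 1: "t*w1*(exp m * (1 + (c/w1 - m))) \<le> t*w1*exp(c/w1)"
    using exp_tan[of m "c/w1"] assms by (intro mult_left_mono) auto
  have 2: "(1-t)*w2*(exp m * (1 + (c/w2 - m))) \<le> (1-t)*w2*exp(c/w2)"
    using exp_tan[of m "c/w2"] assms by (intro mult_left_mono) auto
  have "t*w1*(exp m * (1 + (c/w1 - m))) + (1-t)*w2*(exp m * (1 + (c/w2 - m)))
      = exp m * (w + (t*c + (1-t)*c) - w*m)" using w1 w2 by (simp add: w_def field_simps)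
  also have "\<dots> = w * exp m" using w by (simp add: m_def algebra_simps)
  finally have "w * exp m \<le> t*w1*exp(c/w1) + (1-t)*w2*exp(c/w2)" using 1 2 by linarith
  then show ?thesis unfolding w_def m_def by (simp add: mult.assoc)
qed

lemma phi_strict:
  fixes c :: real
  assumes c: "c > 0" and w1: "w1 > 0" and w2: "w2 > 0" and t: "0 < t" "t < 1" and ne: "w1 \<noteq> w2"
  shows "(t*w1+(1-t)*w2) * exp (c/(t*w1+(1-t)*w2)) < t*(w1*exp(c/w1)) + (1-t)*(w2*exp(c/w2))"
proof -
  define w where "w = t*w1+(1-t)*w2"
  have w: "w > 0"
  proof -
    have "t*w1 > 0" using assms by simp
    moreover have "(1-t)*w2 \<ge> 0" using assms by simp
    ultimately show ?thesis by (simp add: w_def)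
  qed
  define m where "m = c/w"
  have "w1 \<noteq> w"
  proof
    assume "w1 = w"
    then have "(1-t)*w1 = (1-t)*w2" by (simp add: w_def algebra_simps)
    then show False using assms by simp
  qed
  then have ne1: "c/w1 \<noteq> m" using c w w1 by (simp add: m_def field_simps)
  have 1: "t*w1*(exp m * (1 + (c/w1 - m))) < t*w1*exp(c/w1)"
    using exp_tan_strict[OF ne1] assms by simp
  have 2: "(1-t)*w2*(exp m * (1 + (c/w2 - m))) \<le> (1-t)*w2*exp(c/w2)"
    using exp_tan[of m "c/w2"] assms by (intro mult_left_mono) auto
  have "t*w1*(exp m * (1 + (c/w1 - m))) + (1-t)*w2*(exp m * (1 + (c/w2 - m)))
      = exp m * (w + (t*c + (1-t)*c) - w*m)" using w1 w2 by (simp add: w_def field_simps)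
  also have "\<dots> = w * exp m" using w by (simp add: m_def algebra_simps)
  finally have "w * exp m < t*w1*exp(c/w1) + (1-t)*w2*exp(c/w2)" using 1 2 by linarith
  then show ?thesis unfolding w_def m_def by (simp add: mult.assoc)
qed


lemma div_aux:
  fixes a b z l t :: real
  shows "t*a + (1-t)*b \<le> z \<Longrightarrow> 0 < l \<Longrightarrow> t*(a/l) + (1-t)*(b/l) \<le> z/l"
    "t*a + (1-t)*b < z \<Longrightarrow> 0 < l \<Longrightarrow> t*(a/l) + (1-t)*(b/l) < z/l"
proof -
  have e: "t*(a/l) + (1-t)*(b/l) = (t*a + (1-t)*b)/l" by (simp add: add_divide_distrib)
  show "t*a + (1-t)*b \<le> z \<Longrightarrow> 0 < l \<Longrightarrow> t*(a/l) + (1-t)*(b/l) \<le> z/l"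
    unfolding e by (rule divide_right_mono) auto
  show "t*a + (1-t)*b < z \<Longrightarrow> 0 < l \<Longrightarrow> t*(a/l) + (1-t)*(b/l) < z/l"
    unfolding e by (rule divide_strict_right_mono) auto
qed

lemma conv_le: fixes t a b c :: real
  shows "0 \<le> t \<Longrightarrow> t \<le> 1 \<Longrightarrow> a \<le> c \<Longrightarrow> b \<le> c \<Longrightarrow> t*a+(1-t)*b \<le> c"
proof -
  assume "0 \<le> t" "t \<le> 1" "a \<le> c" "b \<le> c"
  then have "t*a \<le> t*c" "(1-t)*b \<le> (1-t)*c" by (auto intro: mult_left_mono)
  then show ?thesis by (simp add: algebra_simps)
qed

lemma conv_less: fixes t a b c :: real
  shows "0 \<le> t \<Longrightarrow> t \<le> 1 \<Longrightarrow> a < c \<Longrightarrow> b < c \<Longrightarrow> t*a+(1-t)*b < c"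
proof -
  assume as: "0 \<le> t" "t \<le> 1" "a < c" "b < c"
  show ?thesis
  proof (cases "t = 0")
    case True then show ?thesis using as by simp
  next
    case False
    then have "t*a < t*c" "(1-t)*b \<le> (1-t)*c" using as by (auto intro: mult_left_mono)
    then show ?thesis by (simp add: algebra_simps)
  qed
qed

lemma conv_ge: fixes t a b c :: real
  shows "0 \<le> t \<Longrightarrow> t \<le> 1 \<Longrightarrow> c \<le> a \<Longrightarrow> c \<le> b \<Longrightarrow> c \<le> t*a+(1-t)*b"
  using conv_le[of t "-a" "-c" "-b"] by (simp add: algebra_simps)

lemma conv_gt: fixes t a b c :: real
  shows "0 \<le> t \<Longrightarrow> t \<le> 1 \<Longrightarrow> c < a \<Longrightarrow> c < b \<Longrightarrow> c < t*a+(1-t)*b"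
  using conv_less[of t "-a" "-c" "-b"] by (simp add: algebra_simps)

context
  fixes N0 \<xi> h g W R :: real
  assumes pos: "N0 > 0" "0 < \<xi>" "W > 0" "R > 0" "h > 0" "g > 0"
begin

abbreviation "Df p w \<equiv> p/\<xi> + (2 powr (R/w) - 1) * (w*N0/(h*\<xi>))"
abbreviation "Nf p w \<equiv> Q (W-w) (p*g/N0) / ln 2"

lemma E2: "EE2 N0 \<xi> h g W R (p,w) = Nf p w / Df p w" by (simp add: EE2_def rate_Q)

lemma pw_gt1: "w > 0 \<Longrightarrow> 2 powr (R/w) > 1" using pos by (intro gr_one_powr) auto

lemma Df_pos: assumes "w > 0" "p \<ge> 0" shows "Df p w > 0"
proof -
  have "(2 powr (R/w) - 1) * (w*N0/(h*\<xi>)) > 0" using pw_gt1[OF assms(1)] assms pos by simp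
  moreover have "p/\<xi> \<ge> 0" using assms pos by simp
  ultimately show ?thesis by linarith
qed

lemma Df_eq: assumes "w > 0"
  shows "Df p w = p/\<xi> + (N0/(h*\<xi>)) * (w * exp ((R*ln 2)/w) - w)"
proof -
  have "2 powr (R/w) = exp ((R*ln 2)/w)" by (simp add: powr_def)
  then show ?thesis using assms pos by (simp add: field_simps)
qed

lemma Nf_nonneg: "p \<ge> 0 \<Longrightarrow> w \<le> W \<Longrightarrow> Nf p w \<ge> 0"
  using pos Q_nonneg[of "W-w" "p*g/N0"] by simp

lemma E2_bound: assumes "p \<ge> 0" "0 < w" "w \<le> W"
  shows "EE2 N0 \<xi> h g W R (p,w) \<le> g*\<xi>/(N0*ln 2)"
proof -
  have "Q (W-w) (p*g/N0) \<le> p*g/N0" using assms pos by (intro Q_le) auto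
  then have "Nf p w \<le> (p*g/N0) / ln 2" by (rule divide_right_mono) simp
  also have "\<dots> = (g*\<xi>/(N0*ln 2)) * (p/\<xi>)" using pos by (simp add: field_simps)
  also have "\<dots> \<le> (g*\<xi>/(N0*ln 2)) * Df p w"
  proof (rule mult_left_mono)
    have "2 powr (R/w) - 1 \<ge> 0" using pw_gt1[OF assms(2)] by linarith
    then have "(2 powr (R/w) - 1) * (w*N0/(h*\<xi>)) \<ge> 0"
      using assms pos by (intro mult_nonneg_nonneg) auto
    then show "p/\<xi> \<le> Df p w" by linarith
  qed (use pos in simp)
  finally show ?thesis using Df_pos[OF assms(2,1)] by (simp add: E2 pos_divide_le_eq)
qed

lemma E2_nonneg: "p \<ge> 0 \<Longrightarrow> 0 < w \<Longrightarrow> w \<le> W \<Longrightarrow> EE2 N0 \<xi> h g W R (p,w) \<ge> 0"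
proof -
  assume as: "p \<ge> 0" "0 < w" "w \<le> W"
  have a: "Nf p w \<ge> 0" using Nf_nonneg as by blast
  have b: "Df p w > 0" using Df_pos as by blast
  show ?thesis unfolding E2 by (rule divide_nonneg_pos[OF a b])
qed

lemma Nf_concave:
  assumes "0 \<le> p1" "w1 \<le> W" "0 \<le> p2" "w2 \<le> W" "0 \<le> t" "t \<le> 1"
  shows "t * Nf p1 w1 + (1-t) * Nf p2 w2 \<le> Nf (t*p1+(1-t)*p2) (t*w1+(1-t)*w2)"
proof -
  have e1: "W - (t*w1+(1-t)*w2) = t*(W-w1) + (1-t)*(W-w2)" by (simp add: algebra_simps)
  have e2: "(t*p1+(1-t)*p2)*g/N0 = t*(p1*g/N0) + (1-t)*(p2*g/N0)" using pos by (simp add: field_simps)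
  have "t*Q (W-w1) (p1*g/N0) + (1-t)*Q (W-w2) (p2*g/N0) \<le> Q (W - (t*w1+(1-t)*w2)) ((t*p1+(1-t)*p2)*g/N0)"
    unfolding e1 e2 using assms pos by (intro Q_concave) auto
  then show ?thesis by (rule div_aux(1)) simp
qed

lemma Nf_strict:
  assumes "0 \<le> p1" "w1 < W" "0 \<le> p2" "p1 \<noteq> p2" "0 < t" "t < 1"
  shows "t * Nf p1 w1 + (1-t) * Nf p2 w1 < Nf (t*p1+(1-t)*p2) (t*w1+(1-t)*w1)"
proof -
  have e1: "t*w1+(1-t)*w1 = w1" by (simp add: algebra_simps)
  have e2: "(t*p1+(1-t)*p2)*g/N0 = t*(p1*g/N0) + (1-t)*(p2*g/N0)" using pos by (simp add: field_simps)
  have "t*Q (W-w1) (p1*g/N0) + (1-t)*Q (W-w1) (p2*g/N0) < Q (W-w1) ((t*p1+(1-t)*p2)*g/N0)"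
    unfolding e2 using assms pos by (intro Q_strict) auto
  then show ?thesis unfolding e1 by (rule div_aux(2)) simp
qed

lemma lin_aux:
  fixes K A B1 B2 :: real
  shows "K*(A - (t*w1+(1-t)*w2)) \<le> K*(t*B1 + (1-t)*B2 - (t*w1+(1-t)*w2)) \<Longrightarrow>
    (t*p1+(1-t)*p2)/\<xi> + K*(A - (t*w1+(1-t)*w2)) \<le> t*(p1/\<xi> + K*(B1 - w1)) + (1-t)*(p2/\<xi> + K*(B2 - w2))"
   "K*(A - (t*w1+(1-t)*w2)) < K*(t*B1 + (1-t)*B2 - (t*w1+(1-t)*w2)) \<Longrightarrow>
    (t*p1+(1-t)*p2)/\<xi> + K*(A - (t*w1+(1-t)*w2)) < t*(p1/\<xi> + K*(B1 - w1)) + (1-t)*(p2/\<xi> + K*(B2 - w2))"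
proof -
  have e: "t*(p1/\<xi> + K*(B1 - w1)) + (1-t)*(p2/\<xi> + K*(B2 - w2)) = (t*p1+(1-t)*p2)/\<xi> + K*(t*B1 + (1-t)*B2 - (t*w1+(1-t)*w2))"
    using pos by (simp add: field_simps)
  show "K*(A - (t*w1+(1-t)*w2)) \<le> K*(t*B1 + (1-t)*B2 - (t*w1+(1-t)*w2)) \<Longrightarrow>
    (t*p1+(1-t)*p2)/\<xi> + K*(A - (t*w1+(1-t)*w2)) \<le> t*(p1/\<xi> + K*(B1 - w1)) + (1-t)*(p2/\<xi> + K*(B2 - w2))"
    unfolding e by simp
  show "K*(A - (t*w1+(1-t)*w2)) < K*(t*B1 + (1-t)*B2 - (t*w1+(1-t)*w2)) \<Longrightarrow>
    (t*p1+(1-t)*p2)/\<xi> + K*(A - (t*w1+(1-t)*w2)) < t*(p1/\<xi> + K*(B1 - w1)) + (1-t)*(p2/\<xi> + K*(B2 - w2))"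
    unfolding e by simp
qed

lemma Df_convex:
  assumes "0 < w1" "0 < w2" "0 \<le> t" "t \<le> 1"
  shows "Df (t*p1+(1-t)*p2) (t*w1+(1-t)*w2) \<le> t * Df p1 w1 + (1-t) * Df p2 w2"
proof -
  define c where "c = R * ln 2"
  define K where "K = N0/(h*\<xi>)"
  have K: "K > 0" using pos by (simp add: K_def)
  have wz: "t*w1+(1-t)*w2 > 0"
  proof (cases "t = 0")
    case False then have "t*w1 > 0" using assms by simp
    moreover have "(1-t)*w2 \<ge> 0" using assms by simp
    ultimately show ?thesis by simp
  qed (use assms in simp)
  have ph: "(t*w1+(1-t)*w2) * exp (c/(t*w1+(1-t)*w2)) \<le> t*(w1*exp(c/w1)) + (1-t)*(w2*exp(c/w2))"
    using phi_convex assms by blast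
  have "K * ((t*w1+(1-t)*w2) * exp (c/(t*w1+(1-t)*w2)) - (t*w1+(1-t)*w2))
     \<le> K * (t*(w1*exp(c/w1)) + (1-t)*(w2*exp(c/w2)) - (t*w1+(1-t)*w2))"
    using ph K by (intro mult_left_mono) auto
  then show ?thesis
    unfolding Df_eq[OF wz] Df_eq[OF assms(1)] Df_eq[OF assms(2)] c_def[symmetric] K_def[symmetric]
    using lin_aux by blast
qed

lemma Df_strict:
  assumes "0 < w1" "0 < w2" "0 < t" "t < 1" "w1 \<noteq> w2"
  shows "Df (t*p1+(1-t)*p2) (t*w1+(1-t)*w2) < t * Df p1 w1 + (1-t) * Df p2 w2"
proof -
  define c where "c = R * ln 2"
  define K where "K = N0/(h*\<xi>)"
  have K: "K > 0" using pos by (simp add: K_def)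
  have c: "c > 0" using pos by (simp add: c_def)
  have wz: "t*w1+(1-t)*w2 > 0"
  proof -
    have "t*w1 > 0" using assms by simp
    moreover have "(1-t)*w2 \<ge> 0" using assms by simp
    ultimately show ?thesis by simp
  qed
  have ph: "(t*w1+(1-t)*w2) * exp (c/(t*w1+(1-t)*w2)) < t*(w1*exp(c/w1)) + (1-t)*(w2*exp(c/w2))"
    using phi_strict[OF c] assms by blast
  have "K * ((t*w1+(1-t)*w2) * exp (c/(t*w1+(1-t)*w2)) - (t*w1+(1-t)*w2))
     < K * (t*(w1*exp(c/w1)) + (1-t)*(w2*exp(c/w2)) - (t*w1+(1-t)*w2))"
    using ph K by (intro mult_strict_left_mono) auto
  then show ?thesis
    unfolding Df_eq[OF wz] Df_eq[OF assms(1)] Df_eq[OF assms(2)] c_def[symmetric] K_def[symmetric]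
    using lin_aux by blast
qed


lemma qc_core:
  assumes "0 \<le> p1" "0 < w1" "w1 \<le> W" "0 \<le> p2" "0 < w2" "w2 \<le> W" "0 \<le> t" "t \<le> 1"
  shows "min (EE2 N0 \<xi> h g W R (p1,w1)) (EE2 N0 \<xi> h g W R (p2,w2))
     \<le> EE2 N0 \<xi> h g W R (t*p1+(1-t)*p2, t*w1+(1-t)*w2)"
proof -
  define \<alpha> where "\<alpha> = min (EE2 N0 \<xi> h g W R (p1,w1)) (EE2 N0 \<xi> h g W R (p2,w2))"
  have a0: "\<alpha> \<ge> 0" using E2_nonneg assms by (simp add: \<alpha>_def)
  have pz: "t*p1+(1-t)*p2 \<ge> 0" using conv_ge[of t 0 p1 p2] assms by simp
  have wz: "t*w1+(1-t)*w2 > 0" using conv_gt[of t 0 w1 w2] assms by simp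
  have wzW: "t*w1+(1-t)*w2 \<le> W" using conv_le[of t w1 W w2] assms by simp
  have D1: "Df p1 w1 > 0" using Df_pos assms by blast
  have D2: "Df p2 w2 > 0" using Df_pos assms by blast
  have Dz: "Df (t*p1+(1-t)*p2) (t*w1+(1-t)*w2) > 0" using Df_pos pz wz by blast
  have "\<alpha> \<le> Nf p1 w1 / Df p1 w1" using E2 by (simp add: \<alpha>_def)
  then have n1: "\<alpha> * Df p1 w1 \<le> Nf p1 w1" using pos_le_divide_eq[OF D1] by blast
  have "\<alpha> \<le> Nf p2 w2 / Df p2 w2" using E2 by (simp add: \<alpha>_def)
  then have n2: "\<alpha> * Df p2 w2 \<le> Nf p2 w2" using pos_le_divide_eq[OF D2] by blast
  have "\<alpha> * Df (t*p1+(1-t)*p2) (t*w1+(1-t)*w2) \<le> \<alpha> * (t * Df p1 w1 + (1-t) * Df p2 w2)"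
    using Df_convex[of w1 w2 t p1 p2] assms a0 by (intro mult_left_mono) auto
  also have "\<dots> = t * (\<alpha> * Df p1 w1) + (1-t) * (\<alpha> * Df p2 w2)" by (simp add: algebra_simps)
  also have "\<dots> \<le> t * Nf p1 w1 + (1-t) * Nf p2 w2"
    using n1 n2 assms by (intro add_mono mult_left_mono) auto
  also have "\<dots> \<le> Nf (t*p1+(1-t)*p2) (t*w1+(1-t)*w2)" using Nf_concave assms by blast
  finally have "\<alpha> \<le> Nf (t*p1+(1-t)*p2) (t*w1+(1-t)*w2) / Df (t*p1+(1-t)*p2) (t*w1+(1-t)*w2)"
    using pos_le_divide_eq[OF Dz] by blast
  then show ?thesis unfolding \<alpha>_def E2 .
qed

lemma sqc_core:
  assumes "0 < p1" "0 < w1" "w1 < W" "0 < p2" "0 < w2" "w2 < W" "0 < t" "t < 1" "(p1,w1) \<noteq> (p2,w2)"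
  shows "min (EE2 N0 \<xi> h g W R (p1,w1)) (EE2 N0 \<xi> h g W R (p2,w2))
     < EE2 N0 \<xi> h g W R (t*p1+(1-t)*p2, t*w1+(1-t)*w2)"
proof -
  define \<alpha> where "\<alpha> = min (EE2 N0 \<xi> h g W R (p1,w1)) (EE2 N0 \<xi> h g W R (p2,w2))"
  have pz: "t*p1+(1-t)*p2 \<ge> 0" using conv_ge[of t 0 p1 p2] assms by simp
  have wz: "t*w1+(1-t)*w2 > 0" using conv_gt[of t 0 w1 w2] assms by simp
  have D1: "Df p1 w1 > 0" using Df_pos assms by simp
  have D2: "Df p2 w2 > 0" using Df_pos assms by simp
  have Dz: "Df (t*p1+(1-t)*p2) (t*w1+(1-t)*w2) > 0" using Df_pos pz wz by blast
  have N1: "Nf p1 w1 > 0" using Q_pos[of "W-w1" "p1*g/N0"] assms pos by simp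
  have N2: "Nf p2 w2 > 0" using Q_pos[of "W-w2" "p2*g/N0"] assms pos by simp
  have "EE2 N0 \<xi> h g W R (p1,w1) > 0" unfolding E2 by (rule divide_pos_pos[OF N1 D1])
  moreover have "EE2 N0 \<xi> h g W R (p2,w2) > 0" unfolding E2 by (rule divide_pos_pos[OF N2 D2])
  ultimately have a0: "\<alpha> > 0" by (simp add: \<alpha>_def)
  have "\<alpha> \<le> Nf p1 w1 / Df p1 w1" using E2 by (simp add: \<alpha>_def)
  then have n1: "\<alpha> * Df p1 w1 \<le> Nf p1 w1" using pos_le_divide_eq[OF D1] by blast
  have "\<alpha> \<le> Nf p2 w2 / Df p2 w2" using E2 by (simp add: \<alpha>_def)
  then have n2: "\<alpha> * Df p2 w2 \<le> Nf p2 w2" using pos_le_divide_eq[OF D2] by blast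
  have m: "t * (\<alpha> * Df p1 w1) + (1-t) * (\<alpha> * Df p2 w2) \<le> t * Nf p1 w1 + (1-t) * Nf p2 w2"
    using n1 n2 assms by (intro add_mono mult_left_mono) auto
  have e: "\<alpha> * (t * Df p1 w1 + (1-t) * Df p2 w2) = t * (\<alpha> * Df p1 w1) + (1-t) * (\<alpha> * Df p2 w2)"
    by (simp add: algebra_simps)
  have "\<alpha> * Df (t*p1+(1-t)*p2) (t*w1+(1-t)*w2) < Nf (t*p1+(1-t)*p2) (t*w1+(1-t)*w2)"
  proof (cases "w1 = w2")
    case True
    then have "p1 \<noteq> p2" using assms by auto
    have "\<alpha> * Df (t*p1+(1-t)*p2) (t*w1+(1-t)*w2) \<le> \<alpha> * (t * Df p1 w1 + (1-t) * Df p2 w2)"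
      using Df_convex[of w1 w2 t p1 p2] assms a0 by (intro mult_left_mono) auto
    also have "\<dots> \<le> t * Nf p1 w1 + (1-t) * Nf p2 w2" using e m by simp
    also have "\<dots> < Nf (t*p1+(1-t)*p2) (t*w1+(1-t)*w2)"
      using Nf_strict[of p1 w1 p2 t] \<open>p1 \<noteq> p2\<close> True assms by simp
    finally show ?thesis .
  next
    case False
    have "\<alpha> * Df (t*p1+(1-t)*p2) (t*w1+(1-t)*w2) < \<alpha> * (t * Df p1 w1 + (1-t) * Df p2 w2)"
      using Df_strict[of w1 w2 t p1 p2] False assms a0 by (intro mult_strict_left_mono) auto
    also have "\<dots> \<le> t * Nf p1 w1 + (1-t) * Nf p2 w2" using e m by simp
    also have "\<dots> \<le> Nf (t*p1+(1-t)*p2) (t*w1+(1-t)*w2)" using Nf_concave assms by simp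
    finally show ?thesis .
  qed
  then have "\<alpha> < Nf (t*p1+(1-t)*p2) (t*w1+(1-t)*w2) / Df (t*p1+(1-t)*p2) (t*w1+(1-t)*w2)"
    using pos_less_divide_eq[OF Dz] by blast
  then show ?thesis unfolding \<alpha>_def E2 .
qed


lemma F1_le:
  assumes "(p,b,q,w) \<in> F1 N0 \<xi> h g W R"
  shows "(p,w) \<in> F2 W" "EE1 N0 \<xi> h g W R (p,b,q,w) \<le> EE2 N0 \<xi> h g W R (p,w)"
proof -
  have A: "0 \<le> p" "0 \<le> b" "0 \<le> q" "0 < w" "w \<le> W" "b + w \<le> W"
      "R \<le> w * log 2 (1 + q * h / (w * N0))" using assms by (auto simp: F1_def)
  show "(p,w) \<in> F2 W" using A by (simp add: F2_def)
  define X where "X = 1 + q * h / (w * N0)"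
  have X: "X \<ge> 1" using A pos by (simp add: X_def)
  have "R/w \<le> log 2 X" using A(7) A(4) by (simp add: X_def pos_divide_le_eq mult.commute)
  then have "2 powr (R/w) \<le> 2 powr (log 2 X)" by (intro powr_mono) auto
  also have "\<dots> = X" using X by simp
  finally have Y: "2 powr (R/w) - 1 \<le> q * h / (w * N0)" by (simp add: X_def)
  have "(2 powr (R/w) - 1) * (w*N0/h) \<le> (q * h / (w * N0)) * (w*N0/h)"
    using Y A pos by (intro mult_right_mono) auto
  also have "\<dots> = q" using A pos by (simp add: field_simps)
  finally have "(2 powr (R/w) - 1) * (w*N0/h) \<le> q" .
  then have "(2 powr (R/w) - 1) * (w*N0/h) / \<xi> \<le> q / \<xi>" by (rule divide_right_mono) (use pos in simp)
  moreover have "(2 powr (R/w) - 1) * (w*N0/h) / \<xi> = (2 powr (R/w) - 1) * (w*N0/(h*\<xi>))" by simp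
  ultimately have Dle: "Df p w \<le> p/\<xi> + q/\<xi>" by linarith
  have Nle: "Q b (p*g/N0) / ln 2 \<le> Nf p w"
    using Q_mono_s[of b "W-w" "p*g/N0"] A pos by (intro divide_right_mono) auto
  have "Q b (p*g/N0) / ln 2 / (p/\<xi> + q/\<xi>) \<le> Nf p w / Df p w"
    by (rule frac_le[OF Nf_nonneg[OF A(1) A(5)] Nle Df_pos[OF A(4) A(1)] Dle])
  then show "EE1 N0 \<xi> h g W R (p,b,q,w) \<le> EE2 N0 \<xi> h g W R (p,w)"
    by (simp only: E2 EE1_def rate_Q split)
qed

lemma lift:
  assumes "(p,w) \<in> F2 W"
  shows "(p, W - w, qmin N0 h R w, w) \<in> F1 N0 \<xi> h g W R"
    "EE1 N0 \<xi> h g W R (p, W - w, qmin N0 h R w, w) = EE2 N0 \<xi> h g W R (p,w)"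
proof -
  have A: "0 \<le> p" "0 < w" "w \<le> W" using assms by (auto simp: F2_def)
  have Y: "2 powr (R/w) - 1 > 0" using pw_gt1[OF A(2)] by linarith
  have Y1: "1 \<le> 2 powr (R/w)" using Y by linarith
  have q0: "qmin N0 h R w \<ge> 0" using Y1 A pos unfolding qmin_def by (intro divide_nonneg_pos mult_nonneg_nonneg) auto
  have e: "qmin N0 h R w * h / (w * N0) = 2 powr (R/w) - 1" using A pos by (simp add: qmin_def field_simps)
  have "w * log 2 (1 + qmin N0 h R w * h / (w * N0)) = R" unfolding e using A by simp
  then show "(p, W - w, qmin N0 h R w, w) \<in> F1 N0 \<xi> h g W R"
    using A q0 by (simp add: F1_def)
  have "qmin N0 h R w / \<xi> = (2 powr (R/w) - 1) * (w*N0/(h*\<xi>))" by (simp add: qmin_def)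
  then show "EE1 N0 \<xi> h g W R (p, W - w, qmin N0 h R w, w) = EE2 N0 \<xi> h g W R (p,w)"
    by (simp add: EE1_def EE2_def)
qed

lemma main:
  shows "(SUP x\<in>F1 N0 \<xi> h g W R. EE1 N0 \<xi> h g W R x) = (SUP y\<in>F2 W. EE2 N0 \<xi> h g W R y)
    \<and> (\<forall>p b q w. (p, b, q, w) \<in> F1 N0 \<xi> h g W R \<and>
          (\<forall>x\<in>F1 N0 \<xi> h g W R. EE1 N0 \<xi> h g W R x \<le> EE1 N0 \<xi> h g W R (p, b, q, w)) \<longrightarrow>
          (p, w) \<in> F2 W \<and> (\<forall>y\<in>F2 W. EE2 N0 \<xi> h g W R y \<le> EE2 N0 \<xi> h g W R (p, w)) \<and>
          EE2 N0 \<xi> h g W R (p, w) = EE1 N0 \<xi> h g W R (p, b, q, w))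
    \<and> (\<forall>p w. (p, w) \<in> F2 W \<and> (\<forall>y\<in>F2 W. EE2 N0 \<xi> h g W R y \<le> EE2 N0 \<xi> h g W R (p, w)) \<longrightarrow>
          (p, W - w, qmin N0 h R w, w) \<in> F1 N0 \<xi> h g W R \<and>
          (\<forall>x\<in>F1 N0 \<xi> h g W R. EE1 N0 \<xi> h g W R x \<le> EE1 N0 \<xi> h g W R (p, W - w, qmin N0 h R w, w)) \<and>
          EE1 N0 \<xi> h g W R (p, W - w, qmin N0 h R w, w) = EE2 N0 \<xi> h g W R (p, w))
    \<and> quasiconcave_on (F2 W) (EE2 N0 \<xi> h g W R)
    \<and> strictly_quasiconcave_on {(p, w). 0 < p \<and> 0 < w \<and> w < W} (EE2 N0 \<xi> h g W R)"
proof (intro conjI allI impI)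
  let ?E1 = "EE1 N0 \<xi> h g W R" and ?E2 = "EE2 N0 \<xi> h g W R" and ?F1 = "F1 N0 \<xi> h g W R"
  have W2: "(0, W) \<in> F2 W" using pos by (simp add: F2_def)
  have ne2: "F2 W \<noteq> {}" using W2 by blast
  have ne1: "?F1 \<noteq> {}" using lift(1)[OF W2] by blast
  have bd2: "bdd_above (?E2 ` F2 W)"
  proof (rule bdd_aboveI2)
    fix y assume "y \<in> F2 W"
    then obtain p w where "y = (p,w)" "0 \<le> p" "0 < w" "w \<le> W" by (auto simp: F2_def)
    then show "?E2 y \<le> g*\<xi>/(N0*ln 2)" using E2_bound by simp
  qed
  have bd1: "bdd_above (?E1 ` ?F1)"
  proof (rule bdd_aboveI2)
    fix x assume x: "x \<in> ?F1"
    obtain p b q w where xe: "x = (p,b,q,w)" by (cases x) auto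
    have "?E1 x \<le> ?E2 (p,w)" using F1_le(2) x xe by simp
    also have "\<dots> \<le> g*\<xi>/(N0*ln 2)" using F1_le(1) x xe E2_bound by (simp add: F2_def)
    finally show "?E1 x \<le> g*\<xi>/(N0*ln 2)" .
  qed
  show "(SUP x\<in>?F1. ?E1 x) = (SUP y\<in>F2 W. ?E2 y)"
  proof (rule antisym)
    show "(SUP x\<in>?F1. ?E1 x) \<le> (SUP y\<in>F2 W. ?E2 y)"
    proof (rule cSUP_mono[OF ne1 bd2])
      fix x assume x: "x \<in> ?F1"
      obtain p b q w where xe: "x = (p,b,q,w)" by (cases x) auto
      show "\<exists>m\<in>F2 W. ?E1 x \<le> ?E2 m" using F1_le x xe by blast
    qed
    show "(SUP y\<in>F2 W. ?E2 y) \<le> (SUP x\<in>?F1. ?E1 x)"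
    proof (rule cSUP_mono[OF ne2 bd1])
      fix y assume y: "y \<in> F2 W"
      obtain p w where ye: "y = (p,w)" by (cases y) auto
      show "\<exists>m\<in>?F1. ?E2 y \<le> ?E1 m" using lift[of p w] y ye by (intro bexI[of _ "(p, W - w, qmin N0 h R w, w)"]) auto
    qed
  qed
  {
    fix p b q w
    assume as: "(p, b, q, w) \<in> ?F1 \<and> (\<forall>x\<in>?F1. ?E1 x \<le> ?E1 (p, b, q, w))"
    show "(p, w) \<in> F2 W" using F1_le as by blast
    have opt: "?E2 y \<le> ?E1 (p,b,q,w)" if "y \<in> F2 W" for y
    proof -
      obtain p' w' where ye: "y = (p',w')" by (cases y) auto
      have "?E2 y = ?E1 (p', W - w', qmin N0 h R w', w')" using lift that ye by simp
      also have "\<dots> \<le> ?E1 (p,b,q,w)" using as lift(1) that ye by simp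
      finally show ?thesis .
    qed
    have le: "?E1 (p,b,q,w) \<le> ?E2 (p,w)" using F1_le as by blast
    show "\<forall>y\<in>F2 W. ?E2 y \<le> ?E2 (p, w)" using opt le by (meson order_trans)
    show "?E2 (p, w) = ?E1 (p, b, q, w)" using opt[of "(p,w)"] le F1_le(1)[of p b q w] as by auto
  }
  {
    fix p w
    assume as: "(p, w) \<in> F2 W \<and> (\<forall>y\<in>F2 W. ?E2 y \<le> ?E2 (p, w))"
    show "(p, W - w, qmin N0 h R w, w) \<in> ?F1" using lift as by blast
    show "?E1 (p, W - w, qmin N0 h R w, w) = ?E2 (p, w)" using lift as by blast
    show "\<forall>x\<in>?F1. ?E1 x \<le> ?E1 (p, W - w, qmin N0 h R w, w)"
    proof
      fix x assume x: "x \<in> ?F1"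
      obtain p' b' q' w' where xe: "x = (p',b',q',w')" by (cases x) auto
      have "?E1 x \<le> ?E2 (p',w')" using F1_le x xe by simp
      also have "\<dots> \<le> ?E2 (p,w)" using as F1_le(1) x xe by simp
      also have "\<dots> = ?E1 (p, W - w, qmin N0 h R w, w)" using lift as by simp
      finally show "?E1 x \<le> ?E1 (p, W - w, qmin N0 h R w, w)" .
    qed
  }
  show "quasiconcave_on (F2 W) ?E2"
    unfolding quasiconcave_on_def
  proof (intro conjI ballI allI impI)
    show "convex (F2 W)"
    proof (rule convexI)
      fix x y :: "real \<times> real" and u v :: real
      assume x: "x \<in> F2 W" and y: "y \<in> F2 W" and uv: "0 \<le> u" "0 \<le> v" "u + v = 1"
      obtain p1 w1 where xe: "x = (p1,w1)" "0 \<le> p1" "0 < w1" "w1 \<le> W" using x by (cases x) (auto simp: F2_def)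
      obtain p2 w2 where ye: "y = (p2,w2)" "0 \<le> p2" "0 < w2" "w2 \<le> W" using y by (cases y) (auto simp: F2_def)
      have v: "v = 1 - u" using uv by simp
      show "u *\<^sub>R x + v *\<^sub>R y \<in> F2 W"
        using conv_ge[of u 0 p1 p2] conv_gt[of u 0 w1 w2] conv_le[of u w1 W w2] xe ye uv
        by (simp add: F2_def v)
    qed
    fix x y :: "real \<times> real" and t :: real
    assume x: "x \<in> F2 W" and y: "y \<in> F2 W" and t: "0 \<le> t \<and> t \<le> 1"
    obtain p1 w1 where xe: "x = (p1,w1)" "0 \<le> p1" "0 < w1" "w1 \<le> W" using x by (cases x) (auto simp: F2_def)
    obtain p2 w2 where ye: "y = (p2,w2)" "0 \<le> p2" "0 < w2" "w2 \<le> W" using y by (cases y) (auto simp: F2_def)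
    show "min (?E2 x) (?E2 y) \<le> ?E2 (t *\<^sub>R x + (1 - t) *\<^sub>R y)"
      using qc_core[of p1 w1 p2 w2 t] xe ye t by simp
  qed
  show "strictly_quasiconcave_on {(p, w). 0 < p \<and> 0 < w \<and> w < W} ?E2"
    unfolding strictly_quasiconcave_on_def
  proof (intro conjI ballI allI impI)
    show "convex {(p::real, w). 0 < p \<and> 0 < w \<and> w < W}"
    proof (rule convexI)
      fix x y :: "real \<times> real" and u v :: real
      assume x: "x \<in> {(p, w). 0 < p \<and> 0 < w \<and> w < W}" and y: "y \<in> {(p, w). 0 < p \<and> 0 < w \<and> w < W}"
        and uv: "0 \<le> u" "0 \<le> v" "u + v = 1"
      obtain p1 w1 where xe: "x = (p1,w1)" "0 < p1" "0 < w1" "w1 < W" using x by (cases x) auto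
      obtain p2 w2 where ye: "y = (p2,w2)" "0 < p2" "0 < w2" "w2 < W" using y by (cases y) auto
      have v: "v = 1 - u" using uv by simp
      show "u *\<^sub>R x + v *\<^sub>R y \<in> {(p, w). 0 < p \<and> 0 < w \<and> w < W}"
        using conv_gt[of u 0 p1 p2] conv_gt[of u 0 w1 w2] conv_less[of u w1 W w2] xe ye uv
        by (simp add: v)
    qed
    fix x y :: "real \<times> real" and t :: real
    assume x: "x \<in> {(p, w). 0 < p \<and> 0 < w \<and> w < W}" and y: "y \<in> {(p, w). 0 < p \<and> 0 < w \<and> w < W}"
      and t: "x \<noteq> y \<and> 0 < t \<and> t < 1"
    obtain p1 w1 where xe: "x = (p1,w1)" "0 < p1" "0 < w1" "w1 < W" using x by (cases x) auto
    obtain p2 w2 where ye: "y = (p2,w2)" "0 < p2" "0 < w2" "w2 < W" using y by (cases y) auto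
    show "min (?E2 x) (?E2 y) < ?E2 (t *\<^sub>R x + (1 - t) *\<^sub>R y)"
      using sqc_core[of p1 w1 p2 w2 t] xe ye t by simp
  qed
qed

end

theorem theorem3:
  fixes N0 \<xi> h g W R :: real
  assumes "N0 > 0" and "0 < \<xi>" and "\<xi> \<le> 1" and "W > 0" and "R > 0" and "h > 0" and "g > 0"
  shows "(SUP x\<in>F1 N0 \<xi> h g W R. EE1 N0 \<xi> h g W R x) = (SUP y\<in>F2 W. EE2 N0 \<xi> h g W R y)
    \<and> (\<forall>p b q w. (p, b, q, w) \<in> F1 N0 \<xi> h g W R \<and>
          (\<forall>x\<in>F1 N0 \<xi> h g W R. EE1 N0 \<xi> h g W R x \<le> EE1 N0 \<xi> h g W R (p, b, q, w)) \<longrightarrow>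
          (p, w) \<in> F2 W \<and> (\<forall>y\<in>F2 W. EE2 N0 \<xi> h g W R y \<le> EE2 N0 \<xi> h g W R (p, w)) \<and>
          EE2 N0 \<xi> h g W R (p, w) = EE1 N0 \<xi> h g W R (p, b, q, w))
    \<and> (\<forall>p w. (p, w) \<in> F2 W \<and> (\<forall>y\<in>F2 W. EE2 N0 \<xi> h g W R y \<le> EE2 N0 \<xi> h g W R (p, w)) \<longrightarrow>
          (p, W - w, qmin N0 h R w, w) \<in> F1 N0 \<xi> h g W R \<and>
          (\<forall>x\<in>F1 N0 \<xi> h g W R. EE1 N0 \<xi> h g W R x \<le> EE1 N0 \<xi> h g W R (p, W - w, qmin N0 h R w, w)) \<and>
          EE1 N0 \<xi> h g W R (p, W - w, qmin N0 h R w, w) = EE2 N0 \<xi> h g W R (p, w))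
    \<and> quasiconcave_on (F2 W) (EE2 N0 \<xi> h g W R)
    \<and> strictly_quasiconcave_on {(p, w). 0 < p \<and> 0 < w \<and> w < W} (EE2 N0 \<xi> h g W R)"
  by (rule main[OF assms(1,2,4,5,6,7)])

end
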